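(* Let $\varphi,\psi$ be independent random variables uniform on $[0,\pi]$, and set $(\alpha,\beta)=(\varphi,\psi)$ if $\varphi+\psi<\pi$ and $(\alpha,\beta)=(\pi-\psi,\pi-\varphi)$ if $\varphi+\psi>\pi$. Let $T$ be the triangle with vertices $A=(0,0)$, $B=(1,0)$ and \[ C=\left(\frac{\tan\beta}{\tan\alpha+\tan\beta},\frac{\tan\alpha\tan\beta}{\tan\alpha+\tan\beta}\right). \] Let $a=\|B-C\|$ and $b=\|A-C\|$. Then each of the random variables $a$, $b$, $a/b$ and $b/a$ has density \[ \frac{2}{\pi^2}\frac{\ln(1+z)-\ln|1-z|}{z},\qquad z>0. \]
   Context: $\|\cdot\|$ is the Euclidean norm. *)

theory Defs
  imports "HOL-Probability.Probability"
begin

text \<open>The null event phi + psi = pi is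
  assigned to the first branch (irrelevant for distributions).\<close>
definition tri_angles :: "real \<Rightarrow> real \<Rightarrow> real \<times> real" where
  "tri_angles \<phi> \<psi> = (if \<phi> + \<psi> \<le> pi then (\<phi>, \<psi>) else (pi - \<psi>, pi - \<phi>))"

definition tri_A :: "real \<times> real" where "tri_A = (0, 0)"
definition tri_B :: "real \<times> real" where "tri_B = (1, 0)"

definition tri_C :: "real \<Rightarrow> real \<Rightarrow> real \<times> real" where
  "tri_C \<phi> \<psi> = (let (\<alpha>, \<beta>) = tri_angles \<phi> \<psi> in
     (tan \<beta> / (tan \<alpha> + tan \<beta>), tan \<alpha> * tan \<beta> / (tan \<alpha> + tan \<beta>)))"

text \<open>Side lengths a = |BC|, b = |AC| (Euclidean norm on real \<times> real).\<close>
definition side_a :: "real \<Rightarrow> real \<Rightarrow> real" where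
  "side_a \<phi> \<psi> = norm (tri_B - tri_C \<phi> \<psi>)"
definition side_b :: "real \<Rightarrow> real \<Rightarrow> real" where
  "side_b \<phi> \<psi> = norm (tri_A - tri_C \<phi> \<psi>)"

definition side_density :: "real \<Rightarrow> real" where
  "side_density z = (if z > 0 then 2 / pi\<^sup>2 * (ln (1 + z) - ln \<bar>1 - z\<bar>) / z else 0)"

end

theory Submission
  imports Defs
begin


definition II :: "(real \<times> real \<Rightarrow> ennreal) \<Rightarrow> ennreal" where
  "II F = (\<integral>\<^sup>+x. (\<integral>\<^sup>+y. (if 0 \<le> x \<and> 0 \<le> y \<and> x + y \<le> pi then F (x, y) else 0) \<partial>lborel) \<partial>lborel)"

lemma nn_integral_reflect:
  fixes f :: "real \<Rightarrow> ennreal" and t :: real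
  assumes "f \<in> borel_measurable borel"
  shows "(\<integral>\<^sup>+x. f x \<partial>lborel) = (\<integral>\<^sup>+x. f (t - x) \<partial>lborel)"
  using nn_integral_real_affine[OF assms, of "-1" t] by simp

lemma II_swap:
  assumes [measurable]: "F \<in> borel_measurable (lborel \<Otimes>\<^sub>M lborel)"
  shows "II F = II (\<lambda>p. F (snd p, fst p))"
proof -
  have "II (\<lambda>p. F (snd p, fst p)) = (\<integral>\<^sup>+x. (\<integral>\<^sup>+y. (if 0 \<le> y \<and> 0 \<le> x \<and> y + x \<le> pi then F (y, x) else 0) \<partial>lborel) \<partial>lborel)"
    unfolding II_def by (intro nn_integral_cong) (auto simp: add.commute)
  also have "\<dots> = II F"
    unfolding II_def by (rule lborel_pair.Fubini') measurable
  finally show ?thesis ..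
qed

lemma II_refl:
  assumes [measurable]: "F \<in> borel_measurable (lborel \<Otimes>\<^sub>M lborel)"
  shows "II F = II (\<lambda>p. F (pi - fst p - snd p, snd p))"
proof -
  have "II F = (\<integral>\<^sup>+y. (\<integral>\<^sup>+x. (if 0 \<le> x \<and> 0 \<le> y \<and> x + y \<le> pi then F (x, y) else 0) \<partial>lborel) \<partial>lborel)"
    unfolding II_def by (rule lborel_pair.Fubini'[symmetric]) measurable
  also have "\<dots> = (\<integral>\<^sup>+y. (\<integral>\<^sup>+x. (if 0 \<le> x \<and> 0 \<le> y \<and> x + y \<le> pi then F (pi - x - y, y) else 0) \<partial>lborel) \<partial>lborel)"
  proof (rule nn_integral_cong)
    fix y :: real
    have "(\<integral>\<^sup>+x. (if 0 \<le> x \<and> 0 \<le> y \<and> x + y \<le> pi then F (x, y) else 0) \<partial>lborel)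
      = (\<integral>\<^sup>+x. (\<lambda>x. if 0 \<le> x \<and> 0 \<le> y \<and> x + y \<le> pi then F (x, y) else 0) ((pi - y) - x) \<partial>lborel)"
      by (rule nn_integral_reflect) measurable
    also have "\<dots> = (\<integral>\<^sup>+x. (if 0 \<le> x \<and> 0 \<le> y \<and> x + y \<le> pi then F (pi - x - y, y) else 0) \<partial>lborel)"
      by (intro nn_integral_cong) (auto simp: algebra_simps)
    finally show "(\<integral>\<^sup>+x. (if 0 \<le> x \<and> 0 \<le> y \<and> x + y \<le> pi then F (x, y) else 0) \<partial>lborel) = (\<integral>\<^sup>+x. (if 0 \<le> x \<and> 0 \<le> y \<and> x + y \<le> pi then F (pi - x - y, y) else 0) \<partial>lborel)" .
  qed
  also have "\<dots> = II (\<lambda>p. F (pi - fst p - snd p, snd p))"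
    unfolding II_def prod.sel by (rule lborel_pair.Fubini') measurable
  finally show ?thesis .
qed

lemma II_cong:
  assumes "\<And>x y. 0 < x \<Longrightarrow> 0 < y \<Longrightarrow> x + y < pi \<Longrightarrow> x \<noteq> pi/2 \<Longrightarrow> y \<noteq> pi/2 \<Longrightarrow> F (x, y) = G (x, y)"
  shows "II F = II G"
  unfolding II_def
proof (intro nn_integral_cong_AE)
  have "AE x in lborel. x \<noteq> 0 \<and> x \<noteq> pi/2"
    using AE_lborel_singleton[of 0] AE_lborel_singleton[of "pi/2"] by eventually_elim auto
  then show "AE x in lborel. (\<integral>\<^sup>+y. (if 0 \<le> x \<and> 0 \<le> y \<and> x + y \<le> pi then F (x, y) else 0) \<partial>lborel) =
       (\<integral>\<^sup>+y. (if 0 \<le> x \<and> 0 \<le> y \<and> x + y \<le> pi then G (x, y) else 0) \<partial>lborel)"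
  proof eventually_elim
    case (elim x)
    have "AE y in lborel. y \<noteq> 0 \<and> y \<noteq> pi/2 \<and> y \<noteq> pi - x"
      using AE_lborel_singleton[of 0] AE_lborel_singleton[of "pi/2"] AE_lborel_singleton[of "pi - x"]
      by eventually_elim auto
    then show ?case
    proof (intro nn_integral_cong_AE, eventually_elim)
      case (elim y)
      then show ?case using assms[of x y] \<open>x \<noteq> 0 \<and> x \<noteq> pi/2\<close> by auto
    qed
  qed
qed

lemma II_fold:
  assumes [measurable]: "F \<in> borel_measurable (lborel \<Otimes>\<^sub>M lborel)"
  shows "(\<integral>\<^sup>+x. (\<integral>\<^sup>+y. (if 0 \<le> x \<and> x \<le> pi \<and> 0 \<le> y \<and> y \<le> pi then F (tri_angles x y) else 0) \<partial>lborel) \<partial>lborel)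
    = 2 * II F"
proof -
  define A where "A x y = (if 0 \<le> x \<and> 0 \<le> y \<and> x + y \<le> pi then F (x, y) else 0)" for x y
  define B where "B x y = (if 0 \<le> x \<and> x \<le> pi \<and> 0 \<le> y \<and> y \<le> pi \<and> x + y > pi then F (pi - y, pi - x) else 0)" for x y
  have [measurable]: "case_prod A \<in> borel_measurable (lborel \<Otimes>\<^sub>M lborel)"
    unfolding A_def by measurable
  have [measurable]: "case_prod B \<in> borel_measurable (lborel \<Otimes>\<^sub>M lborel)"
    unfolding B_def by measurable
  have "(\<integral>\<^sup>+x. (\<integral>\<^sup>+y. (if 0 \<le> x \<and> x \<le> pi \<and> 0 \<le> y \<and> y \<le> pi then F (tri_angles x y) else 0) \<partial>lborel) \<partial>lborel)
    = (\<integral>\<^sup>+x. (\<integral>\<^sup>+y. A x y + B x y \<partial>lborel) \<partial>lborel)"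
    by (intro nn_integral_cong) (auto simp: A_def B_def tri_angles_def)
  also have "\<dots> = (\<integral>\<^sup>+x. (\<integral>\<^sup>+y. A x y \<partial>lborel) + (\<integral>\<^sup>+y. B x y \<partial>lborel) \<partial>lborel)"
    by (intro nn_integral_cong nn_integral_add) measurable
  also have "\<dots> = (\<integral>\<^sup>+x. (\<integral>\<^sup>+y. A x y \<partial>lborel) \<partial>lborel) + (\<integral>\<^sup>+x. (\<integral>\<^sup>+y. B x y \<partial>lborel) \<partial>lborel)"
    by (intro nn_integral_add) measurable
  also have "(\<integral>\<^sup>+x. (\<integral>\<^sup>+y. A x y \<partial>lborel) \<partial>lborel) = II F"
    unfolding II_def A_def ..
  also have "(\<integral>\<^sup>+x. (\<integral>\<^sup>+y. B x y \<partial>lborel) \<partial>lborel) = II F"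
  proof -
    define B' where "B' x y = (if 0 \<le> x \<and> x \<le> pi \<and> 0 \<le> y \<and> y \<le> pi \<and> y < x then F (y, pi - x) else 0)" for x y
    have [measurable]: "case_prod B' \<in> borel_measurable (lborel \<Otimes>\<^sub>M lborel)"
      unfolding B'_def by measurable
    have "(\<integral>\<^sup>+x. (\<integral>\<^sup>+y. B x y \<partial>lborel) \<partial>lborel) = (\<integral>\<^sup>+x. (\<integral>\<^sup>+y. B' x y \<partial>lborel) \<partial>lborel)"
    proof (rule nn_integral_cong)
      fix x :: real
      have "(\<integral>\<^sup>+y. B x y \<partial>lborel) = (\<integral>\<^sup>+y. B x (pi - y) \<partial>lborel)"
        by (rule nn_integral_reflect) measurable
      also have "\<dots> = (\<integral>\<^sup>+y. B' x y \<partial>lborel)"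
        by (intro nn_integral_cong) (auto simp: B_def B'_def)
      finally show "(\<integral>\<^sup>+y. B x y \<partial>lborel) = (\<integral>\<^sup>+y. B' x y \<partial>lborel)" .
    qed
    also have "\<dots> = (\<integral>\<^sup>+y. (\<integral>\<^sup>+x. B' x y \<partial>lborel) \<partial>lborel)"
      by (rule lborel_pair.Fubini'[symmetric]) measurable
    also have "\<dots> = (\<integral>\<^sup>+y. (\<integral>\<^sup>+x. (if 0 \<le> y \<and> 0 \<le> x \<and> y + x \<le> pi then F (y, x) else 0) \<partial>lborel) \<partial>lborel)"
    proof (rule nn_integral_cong)
      fix y :: real
      have "(\<integral>\<^sup>+x. B' x y \<partial>lborel) = (\<integral>\<^sup>+x. B' (pi - x) y \<partial>lborel)"
        by (rule nn_integral_reflect) measurable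
      also have "\<dots> = (\<integral>\<^sup>+x. (if 0 \<le> y \<and> 0 \<le> x \<and> y + x \<le> pi then F (y, x) else 0) \<partial>lborel)"
      proof (intro nn_integral_cong_AE)
        show "AE x in lborel. B' (pi - x) y = (if 0 \<le> y \<and> 0 \<le> x \<and> y + x \<le> pi then F (y, x) else 0)"
          using AE_lborel_singleton[of "pi - y"]
          by eventually_elim (auto simp: B'_def)
      qed
      finally show "(\<integral>\<^sup>+x. B' x y \<partial>lborel) = (\<integral>\<^sup>+x. (if 0 \<le> y \<and> 0 \<le> x \<and> y + x \<le> pi then F (y, x) else 0) \<partial>lborel)" .
    qed
    also have "\<dots> = II F" unfolding II_def ..
    finally show ?thesis .
  qed
  finally show ?thesis by (simp add: mult_2)
qed



definition bq :: "real \<times> real \<Rightarrow> real" where "bq p = sin (snd p) / sin (fst p + snd p)"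
definition kk :: "real \<Rightarrow> real \<Rightarrow> real" where "kk x z = sin x / (z^2 - 2*z*cos x + 1)"
definition cc :: "real \<Rightarrow> real \<Rightarrow> real" where "cc x t = arctan ((t - cos x) / sin x) + pi/2 - x"

lemma arctan_cot:
  assumes "0 < x" "x < pi"
  shows "arctan (- cos x / sin x) = x - pi/2"
proof -
  have "tan (x - pi/2) = - cos x / sin x" by (simp add: tan_def sin_diff cos_diff)
  then show ?thesis using arctan_tan[of "x - pi/2"] assms by simp
qed

lemma bq_mono:
  assumes "0 < x" "x < pi" "0 \<le> y1" "y1 < y2" "y2 < pi - x"
  shows "bq (x, y1) < bq (x, y2)"
proof -
  have s1: "sin (x + y1) > 0" by (rule sin_gt_zero) (use assms in auto)
  have s2: "sin (x + y2) > 0" by (rule sin_gt_zero) (use assms in auto)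
  have id: "sin y2 * sin (x + y1) - sin y1 * sin (x + y2) = sin x * sin (y2 - y1)"
    by (simp add: sin_add sin_diff algebra_simps)
  have "sin x * sin (y2 - y1) > 0"
    using assms by (intro mult_pos_pos sin_gt_zero) auto
  then have "sin y1 * sin (x + y2) < sin y2 * sin (x + y1)" using id by linarith
  then show ?thesis using s1 s2 by (simp add: bq_def field_simps)
qed

lemma cc_props:
  assumes "0 < x" "x < pi" "0 < t"
  shows "0 < cc x t" "cc x t < pi - x" "bq (x, cc x t) = t"
proof -
  define u where "u = (t - cos x) / sin x"
  define th where "th = arctan u"
  have sx: "sin x > 0" using assms by (intro sin_gt_zero) auto
  have thb: "- (pi/2) < th" "th < pi/2" using arctan_bounded[of u] by (auto simp: th_def)
  have "t / sin x > 0" using sx assms by simp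
  then have "- cos x / sin x < u" by (simp add: u_def diff_divide_distrib)
  then have "arctan (- cos x / sin x) < th" by (simp add: th_def arctan_less_iff)
  then show "0 < cc x t" using arctan_cot[OF assms(1,2)] by (simp add: cc_def u_def th_def)
  show "cc x t < pi - x" using thb by (simp add: cc_def u_def th_def)
  have ct: "cos th > 0" using thb by (intro cos_gt_zero_pi) auto
  have tt: "sin th / cos th = u" using tan_arctan[of u] by (simp add: th_def tan_def)
  have "cc x t = th + pi/2 - x" by (simp add: cc_def th_def u_def)
  then have "bq (x, cc x t) = sin (th + pi/2 - x) / sin (th + pi/2)"
    by (simp add: bq_def)
  also have "\<dots> = (cos th * cos x + sin th * sin x) / cos th"
    by (simp add: sin_add cos_add sin_diff cos_diff)
  also have "\<dots> = cos x + (sin th / cos th) * sin x" using ct by (simp add: field_simps)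
  also have "\<dots> = t" using sx by (simp add: tt u_def)
  finally show "bq (x, cc x t) = t" .
qed



lemma bq_pos:
  assumes "0 < x" "x < pi" "0 < y" "y < pi - x"
  shows "bq (x, y) > 0"
proof -
  have "sin y > 0" by (rule sin_gt_zero) (use assms in auto)
  moreover have "sin (x + y) > 0" by (rule sin_gt_zero) (use assms in auto)
  ultimately show ?thesis by (simp add: bq_def)
qed

lemma inner_y:
  assumes "0 < x" "x < pi"
  shows "(\<integral>\<^sup>+y. (if 0 \<le> x \<and> 0 \<le> y \<and> x + y \<le> pi then indicator {..t} (bq (x, y)) else 0) \<partial>lborel)
     = (if t > 0 then ennreal (cc x t) else 0)"
proof (cases "t > 0")
  case True
  note c = cc_props[OF assms True]
  have "(\<integral>\<^sup>+y. (if 0 \<le> x \<and> 0 \<le> y \<and> x + y \<le> pi then indicator {..t} (bq (x, y)) else 0) \<partial>lborel)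
      = (\<integral>\<^sup>+y. indicator {0..cc x t} y \<partial>lborel)"
  proof (rule nn_integral_cong_AE)
    show "AE y in lborel. (if 0 \<le> x \<and> 0 \<le> y \<and> x + y \<le> pi then indicator {..t} (bq (x, y)) else 0) = (indicator {0..cc x t} y :: ennreal)"
      using AE_lborel_singleton[of "pi - x"]
    proof eventually_elim
      case (elim y)
      show ?case
      proof (cases "0 \<le> y \<and> y < pi - x")
        case True
        show ?thesis
        proof (cases "y \<le> cc x t")
          case le: True
          have "bq (x, y) \<le> t"
          proof (cases "y = cc x t")
            case True then show ?thesis using c by simp
          next
            case False then show ?thesis using bq_mono[of x y "cc x t"] assms le True c by simp
          qed
          then show ?thesis using True le assms by (auto simp: indicator_def)
        next
          case gt: False
          have "bq (x, y) > t" using bq_mono[of x "cc x t" y] assms gt True c by simp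
          then show ?thesis using True gt by (auto simp: indicator_def)
        qed
      next
        case False
        then show ?thesis using elim c by (auto simp: indicator_def)
      qed
    qed
  qed
  also have "\<dots> = ennreal (cc x t)" using c by simp
  finally show ?thesis using True by simp
next
  case False
  have "(\<integral>\<^sup>+y. (if 0 \<le> x \<and> 0 \<le> y \<and> x + y \<le> pi then indicator {..t} (bq (x, y)) else 0) \<partial>lborel)
      = (\<integral>\<^sup>+(y::real). 0 \<partial>lborel)"
  proof (rule nn_integral_cong_AE)
    show "AE y in lborel. (if 0 \<le> x \<and> 0 \<le> y \<and> x + y \<le> pi then indicator {..t} (bq (x, y)) else 0) = (0 :: ennreal)"
      using AE_lborel_singleton[of "pi - x"] AE_lborel_singleton[of 0]
    proof eventually_elim
      case (elim y)
      show ?case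
      proof (cases "0 < y \<and> y < pi - x")
        case True
        then have "bq (x, y) > 0" using bq_pos assms by auto
        then show ?thesis using False by (auto simp: indicator_def)
      next
        case False
        then show ?thesis using elim by auto
      qed
    qed
  qed
  then show ?thesis using False by simp
qed

lemma kk_deriv_z:
  assumes "0 < x" "x < pi"
  shows "((\<lambda>z. arctan ((z - cos x) / sin x)) has_real_derivative kk x z) (at z)"
proof -
  have sx: "sin x > 0" using assms by (intro sin_gt_zero) auto
  have d: "z^2 - 2*z*cos x + 1 = (z - cos x)^2 + (sin x)^2"
    using sin_cos_squared_add[of x] by (simp add: power2_eq_square algebra_simps)
  have pos: "(z - cos x)^2 + (sin x)^2 > 0" using sx by (simp add: add_nonneg_pos)
  have i: "((\<lambda>z. (z - cos x) / sin x) has_real_derivative 1 / sin x) (at z)"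
    using sx by (auto intro!: derivative_eq_intros)
  have "((\<lambda>z. arctan ((z - cos x) / sin x)) has_real_derivative inverse (1 + ((z - cos x) / sin x)\<^sup>2) * (1 / sin x)) (at z)"
    by (rule DERIV_chain2[OF DERIV_arctan i])
  moreover have "inverse (1 + ((z - cos x) / sin x)\<^sup>2) * (1 / sin x) = kk x z"
    using sx pos unfolding kk_def d
    by (simp add: field_simps power2_eq_square)
  ultimately show ?thesis by simp
qed

lemma inner_z:
  assumes "0 < x" "x < pi" "0 < t"
  shows "(\<integral>\<^sup>+z. ennreal (kk x z) * indicator {0..t} z \<partial>lborel) = ennreal (cc x t)"
proof -
  have sx: "sin x > 0" using assms by (intro sin_gt_zero) auto
  have nn: "kk x z \<ge> 0" for z
  proof -
    have "z^2 - 2*z*cos x + 1 = (z - cos x)^2 + (sin x)^2"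
      using sin_cos_squared_add[of x] by (simp add: power2_eq_square algebra_simps)
    moreover have "(z - cos x)^2 + (sin x)^2 > 0" using sx by (simp add: add_nonneg_pos)
    ultimately show ?thesis using sx by (simp add: kk_def)
  qed
  have "(\<integral>\<^sup>+z. ennreal (kk x z) * indicator {0..t} z \<partial>lborel)
     = ennreal (arctan ((t - cos x) / sin x) - arctan ((0 - cos x) / sin x))"
    by (rule nn_integral_FTC_Icc) (use assms nn kk_deriv_z in \<open>auto simp: kk_def\<close>)
  also have "arctan ((t - cos x) / sin x) - arctan ((0 - cos x) / sin x) = cc x t"
    using arctan_cot[OF assms(1,2)] by (simp add: cc_def)
  finally show ?thesis .
qed



lemma inner_x:
  assumes "0 < z" "z \<noteq> 1"
  shows "(\<integral>\<^sup>+x. ennreal (kk x z) * indicator {0..pi} x \<partial>lborel) = ennreal ((ln (1+z) - ln \<bar>1-z\<bar>)/z)"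
proof -
  define D where "D x = z^2 - 2*z*cos x + 1" for x
  have Dpos: "D x > 0" for x
  proof -
    have eq: "D x = (z - cos x)^2 + (sin x)^2"
      using sin_cos_squared_add[of x] by (simp add: D_def power2_eq_square algebra_simps)
    have "D x \<noteq> 0"
    proof
      assume "D x = 0"
      then have "z - cos x = 0" "sin x = 0" using eq
        by (smt (verit) zero_le_power2 power2_less_eq_zero_iff)+
      then have "z^2 = 1" using sin_cos_squared_add[of x] by simp
      then show False using assms by (simp add: power2_eq_1_iff)
    qed
    moreover have "D x \<ge> 0" using eq by simp
    ultimately show ?thesis by simp
  qed
  have der: "((\<lambda>x. ln (D x) / (2*z)) has_real_derivative kk x z) (at x)" for x
  proof -
    have d1: "(D has_real_derivative 2 * z * sin x) (at x)"
      unfolding D_def by (auto intro!: derivative_eq_intros)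
    have "((\<lambda>x. ln (D x) / (2*z)) has_real_derivative (inverse (D x) * (2 * z * sin x)) / (2*z)) (at x)"
      by (rule DERIV_cdivide[OF DERIV_chain2[OF DERIV_ln[OF Dpos] d1]])
    moreover have "(inverse (D x) * (2 * z * sin x)) / (2*z) = kk x z"
      using assms Dpos[of x] unfolding kk_def D_def[symmetric] by (simp add: field_simps)
    ultimately show ?thesis by simp
  qed
  have "(\<integral>\<^sup>+x. ennreal (kk x z) * indicator {0..pi} x \<partial>lborel) = ennreal (ln (D pi) / (2*z) - ln (D 0) / (2*z))"
  proof (rule nn_integral_FTC_Icc)
    show "kk x z \<ge> 0" if "x \<in> {0..pi}" for x
      using that Dpos[of x] sin_ge_zero[of x] by (simp add: kk_def D_def)
  qed (use der in \<open>auto simp: kk_def\<close>)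
  also have "ln (D pi) / (2*z) - ln (D 0) / (2*z) = (ln (1+z) - ln \<bar>1-z\<bar>)/z"
  proof -
    have "D pi = (1+z)^2" by (simp add: D_def power2_eq_square algebra_simps)
    moreover have "D 0 = \<bar>1-z\<bar>^2" by (simp add: D_def power2_eq_square algebra_simps)
    moreover have pos: "\<bar>1-z\<bar> > 0" using assms by simp
    ultimately have e1: "ln (D pi) = 2 * ln (1+z)" and e2: "ln (D 0) = 2 * ln \<bar>1-z\<bar>"
      using ln_realpow[of "\<bar>1-z\<bar>" 2] ln_realpow[of "1+z" 2] assms by simp_all
    show ?thesis unfolding e1 e2 using assms by (simp add: field_simps)
  qed
  finally show ?thesis .
qed



lemma II_bq:
  "II (\<lambda>p. indicator {..t} (bq p)) = (\<integral>\<^sup>+x. (if t > 0 then ennreal (cc x t) else 0) * indicator {0<..<pi} x \<partial>lborel)"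
  unfolding II_def
proof (rule nn_integral_cong_AE)
  show "AE x in lborel. (\<integral>\<^sup>+y. (if 0 \<le> x \<and> 0 \<le> y \<and> x + y \<le> pi then indicator {..t} (bq (x, y)) else 0) \<partial>lborel)
     = (if t > 0 then ennreal (cc x t) else 0) * indicator {0<..<pi} x"
    using AE_lborel_singleton[of 0] AE_lborel_singleton[of pi]
  proof eventually_elim
    case (elim x)
    show ?case
    proof (cases "0 < x \<and> x < pi")
      case True
      then show ?thesis using inner_y[of x t] by simp
    next
      case False
      then have "(\<lambda>y. (if 0 \<le> x \<and> 0 \<le> y \<and> x + y \<le> pi then indicator {..t} (bq (x, y)) else 0 :: ennreal)) = (\<lambda>y. 0)"
        using elim pi_gt_zero by (auto intro!: ext)
      then show ?thesis using False by simp
    qed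
  qed
qed

lemma core:
  "2 * II (\<lambda>p. indicator {..t} (bq p)) = ennreal (pi^2) * (\<integral>\<^sup>+z. ennreal (side_density z) * indicator {..t} z \<partial>lborel)"
proof (cases "t > 0")
  case False
  have "(\<lambda>z. ennreal (side_density z) * indicator {..t} z) = (\<lambda>z. 0)"
    using False by (auto intro!: ext simp: side_density_def indicator_def)
  then show ?thesis using False by (simp add: II_bq)
next
  case True
  define J where "J = (\<integral>\<^sup>+x. ennreal (cc x t) * indicator {0<..<pi} x \<partial>lborel)"
  have IIJ: "II (\<lambda>p. indicator {..t} (bq p)) = J" using True by (simp add: II_bq J_def)
  define G where "G x z = ennreal (kk x z) * indicator {0..t} z * indicator {0..pi} x" for x z
  have [measurable]: "case_prod G \<in> borel_measurable (lborel \<Otimes>\<^sub>M lborel)"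
    unfolding G_def kk_def by measurable
  have "(\<integral>\<^sup>+z. ennreal (side_density z) * indicator {..t} z \<partial>lborel)
      = (\<integral>\<^sup>+z. ennreal (2/pi^2) * (\<integral>\<^sup>+x. G x z \<partial>lborel) \<partial>lborel)"
  proof (rule nn_integral_cong_AE)
    show "AE z in lborel. ennreal (side_density z) * indicator {..t} z = ennreal (2/pi^2) * (\<integral>\<^sup>+x. G x z \<partial>lborel)"
      using AE_lborel_singleton[of 0] AE_lborel_singleton[of 1]
    proof eventually_elim
      case (elim z)
      have eqG: "(\<integral>\<^sup>+x. G x z \<partial>lborel) = (\<integral>\<^sup>+x. ennreal (kk x z) * indicator {0..pi} x \<partial>lborel) * indicator {0..t} z"
        unfolding G_def
        by (subst nn_integral_multc[symmetric]) (auto simp: kk_def ac_simps intro!: nn_integral_cong)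
      show ?case
      proof (cases "0 < z \<and> z \<le> t")
        case True
        have "ennreal (side_density z) = ennreal (2/pi^2) * ennreal ((ln (1+z) - ln \<bar>1-z\<bar>)/z)"
          using True by (simp add: side_density_def ennreal_mult'[symmetric])
        then show ?thesis using True elim by (simp add: eqG inner_x)
      next
        case False
        then show ?thesis using elim by (auto simp: eqG side_density_def indicator_def)
      qed
    qed
  qed
  also have "\<dots> = ennreal (2/pi^2) * (\<integral>\<^sup>+z. (\<integral>\<^sup>+x. G x z \<partial>lborel) \<partial>lborel)"
    by (rule nn_integral_cmult) measurable
  also have "(\<integral>\<^sup>+z. (\<integral>\<^sup>+x. G x z \<partial>lborel) \<partial>lborel) = (\<integral>\<^sup>+x. (\<integral>\<^sup>+z. G x z \<partial>lborel) \<partial>lborel)"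
    by (rule lborel_pair.Fubini') measurable
  also have "\<dots> = J"
    unfolding J_def
  proof (rule nn_integral_cong_AE)
    show "AE x in lborel. (\<integral>\<^sup>+z. G x z \<partial>lborel) = ennreal (cc x t) * indicator {0<..<pi} x"
      using AE_lborel_singleton[of 0] AE_lborel_singleton[of pi]
    proof eventually_elim
      case (elim x)
      have eqG: "(\<integral>\<^sup>+z. G x z \<partial>lborel) = (\<integral>\<^sup>+z. ennreal (kk x z) * indicator {0..t} z \<partial>lborel) * indicator {0..pi} x"
        unfolding G_def
        by (subst nn_integral_multc[symmetric]) (auto simp: kk_def)
      show ?case
      proof (cases "0 < x \<and> x < pi")
        case True
        then show ?thesis using \<open>t > 0\<close> by (simp add: eqG inner_z)
      next
        case False
        then show ?thesis using elim by (auto simp: eqG indicator_def)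
      qed
    qed
  qed
  finally have R: "(\<integral>\<^sup>+z. ennreal (side_density z) * indicator {..t} z \<partial>lborel) = ennreal (2/pi^2) * J" .
  have "ennreal (pi^2) * ennreal (2/pi^2) = 2"
    by (subst ennreal_mult[symmetric]) auto
  then have "ennreal (pi^2) * (ennreal (2/pi^2) * J) = 2 * J"
    by (metis mult.assoc)
  then show ?thesis using R IIJ by simp
qed



definition Ca :: "real \<times> real \<Rightarrow> real \<times> real" where
  "Ca p = (tan (snd p) / (tan (fst p) + tan (snd p)), tan (fst p) * tan (snd p) / (tan (fst p) + tan (snd p)))"
definition Ha :: "real \<times> real \<Rightarrow> real" where "Ha p = norm (tri_B - Ca p)"
definition Hb :: "real \<times> real \<Rightarrow> real" where "Hb p = norm (tri_A - Ca p)"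

lemma side_a_eq: "side_a x y = Ha (tri_angles x y)"
  by (simp add: side_a_def Ha_def tri_C_def Ca_def split: prod.split)
lemma side_b_eq: "side_b x y = Hb (tri_angles x y)"
  by (simp add: side_b_def Hb_def tri_C_def Ca_def split: prod.split)

lemma cos_ne0:
  assumes "0 < x" "x < pi" "x \<noteq> pi/2" shows "cos x \<noteq> 0"
proof
  assume "cos x = 0"
  then have "cos x = cos (pi/2)" by simp
  then have "x = pi/2" using cos_inj_pi[of x "pi/2"] assms by auto
  then show False using assms by simp
qed

lemma norm_polar: "r \<ge> 0 \<Longrightarrow> norm (r * cos x, r * sin x) = r"
proof -
  assume r: "r \<ge> 0"
  have "(r * cos x)^2 + (r * sin x)^2 = r^2"
    using sin_cos_squared_add[of x] by (simp add: power_mult_distrib flip: distrib_left)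
  then show ?thesis using r by (simp add: norm_Pair)
qed

lemma H_formulas:
  assumes "0 < x" "0 < y" "x + y < pi" "x \<noteq> pi/2" "y \<noteq> pi/2"
  shows "Hb (x, y) = bq (x, y)" "Ha (x, y) = bq (y, x)"
proof -
  have cx: "cos x \<noteq> 0" using cos_ne0[of x] assms by auto
  have cy: "cos y \<noteq> 0" using cos_ne0[of y] assms by auto
  have s: "sin (x + y) > 0" by (rule sin_gt_zero) (use assms in auto)
  have sx: "sin x > 0" by (rule sin_gt_zero) (use assms in auto)
  have sy: "sin y > 0" by (rule sin_gt_zero) (use assms in auto)
  have ts: "tan x + tan y = sin (x + y) / (cos x * cos y)" by (rule add_tan_eq[OF cx cy])
  have c1: "tan y / (tan x + tan y) = sin y / sin (x + y) * cos x"
    unfolding ts tan_def using cx cy s by (simp add: field_simps sin_add)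
  have c2: "tan x * tan y / (tan x + tan y) = sin y / sin (x + y) * sin x"
    unfolding ts tan_def using cx cy s by (simp add: field_simps sin_add)
  have C: "Ca (x, y) = (sin y / sin (x + y) * cos x, sin y / sin (x + y) * sin x)"
    unfolding Ca_def using c1 c2 by simp
  have r1: "sin y / sin (x + y) \<ge> 0" using s sy by simp
  have r2: "sin x / sin (x + y) \<ge> 0" using s sx by simp
  have "Hb (x, y) = norm (- (sin y / sin (x + y) * cos x, sin y / sin (x + y) * sin x))"
    unfolding Hb_def C tri_A_def by simp
  also have "\<dots> = sin y / sin (x + y)" by (simp only: norm_minus_cancel norm_polar[OF r1])
  finally show "Hb (x, y) = bq (x, y)" by (simp add: bq_def)
  have e1: "1 - sin y / sin (x + y) * cos x = sin x / sin (x + y) * cos y"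
    using s by (simp add: field_simps sin_add)
  have e2: "0 - sin y / sin (x + y) * sin x = sin x / sin (x + y) * sin (-y)"
    by simp
  have "tri_B - Ca (x, y) = (1 - sin y / sin (x + y) * cos x, 0 - sin y / sin (x + y) * sin x)"
    unfolding C tri_B_def by simp
  also have "\<dots> = (sin x / sin (x + y) * cos (-y), sin x / sin (x + y) * sin (-y))"
    unfolding e1 e2 by simp
  finally have "Ha (x, y) = sin x / sin (x + y)"
    unfolding Ha_def by (simp only: norm_polar[OF r2])
  then show "Ha (x, y) = bq (y, x)" by (simp add: bq_def add.commute)
qed



lemma Ha_alt: "Ha p = sqrt ((1 - fst (Ca p))^2 + (snd (Ca p))^2)"
  unfolding Ha_def tri_B_def by (cases "Ca p") (simp add: norm_Pair)
lemma Hb_alt: "Hb p = sqrt ((fst (Ca p))^2 + (snd (Ca p))^2)"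
  unfolding Hb_def tri_A_def by (cases "Ca p") (simp add: norm_Pair)

lemma Ha_meas[measurable]: "Ha \<in> borel_measurable (lborel \<Otimes>\<^sub>M lborel)"
  unfolding Ha_alt[abs_def] Ca_def tan_def by measurable
lemma Hb_meas[measurable]: "Hb \<in> borel_measurable (lborel \<Otimes>\<^sub>M lborel)"
  unfolding Hb_alt[abs_def] Ca_def tan_def by measurable
lemma bq_meas[measurable]: "bq \<in> borel_measurable (lborel \<Otimes>\<^sub>M lborel)"
  unfolding bq_def by measurable

lemma tri_angles_meas[measurable]: "(\<lambda>p. tri_angles (fst p) (snd p)) \<in> measurable (lborel \<Otimes>\<^sub>M lborel) (lborel \<Otimes>\<^sub>M lborel)"
  unfolding tri_angles_def by measurable

lemma ind_bq_meas[measurable]: "(\<lambda>p. indicator {..t} (bq p) :: ennreal) \<in> borel_measurable (lborel \<Otimes>\<^sub>M lborel)"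
  by measurable

lemma sum_b: "2 * II (\<lambda>p. indicator {..t} (Hb p)) = ennreal (pi^2) * (\<integral>\<^sup>+z. ennreal (side_density z) * indicator {..t} z \<partial>lborel)"
proof -
  have "II (\<lambda>p. indicator {..t} (Hb p)) = II (\<lambda>p. indicator {..t} (bq p))"
    by (rule II_cong) (simp add: H_formulas)
  then show ?thesis using core by simp
qed

lemma sum_a: "2 * II (\<lambda>p. indicator {..t} (Ha p)) = ennreal (pi^2) * (\<integral>\<^sup>+z. ennreal (side_density z) * indicator {..t} z \<partial>lborel)"
proof -
  have "II (\<lambda>p. indicator {..t} (Ha p)) = II (\<lambda>p. (\<lambda>q. indicator {..t} (bq q)) (snd p, fst p))"
    by (rule II_cong) (simp add: H_formulas)
  also have "\<dots> = II (\<lambda>p. indicator {..t} (bq p))"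
    by (rule II_swap[symmetric]) measurable
  finally show ?thesis using core by simp
qed

lemma ratio_formula:
  assumes "0 < x" "0 < y" "x + y < pi" "x \<noteq> pi/2" "y \<noteq> pi/2"
  shows "Hb (x, y) / Ha (x, y) = bq (pi - x - y, y)"
proof -
  have s: "sin (x + y) > 0" by (rule sin_gt_zero) (use assms in auto)
  have "Hb (x, y) / Ha (x, y) = sin y / sin x"
    using H_formulas[OF assms] s by (simp add: bq_def add.commute)
  also have "sin x = sin (pi - x - y + y)" by simp
  finally show ?thesis by (simp add: bq_def)
qed

lemma sum_ba: "2 * II (\<lambda>p. indicator {..t} (Hb p / Ha p)) = ennreal (pi^2) * (\<integral>\<^sup>+z. ennreal (side_density z) * indicator {..t} z \<partial>lborel)"
proof -
  have "II (\<lambda>p. indicator {..t} (Hb p / Ha p)) = II (\<lambda>p. (\<lambda>q. indicator {..t} (bq q)) (pi - fst p - snd p, snd p))"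
    by (rule II_cong) (simp add: ratio_formula)
  also have "\<dots> = II (\<lambda>p. indicator {..t} (bq p))"
    by (rule II_refl[symmetric]) measurable
  finally show ?thesis using core by simp
qed

lemma sum_ab: "2 * II (\<lambda>p. indicator {..t} (Ha p / Hb p)) = ennreal (pi^2) * (\<integral>\<^sup>+z. ennreal (side_density z) * indicator {..t} z \<partial>lborel)"
proof -
  define F where "F = (\<lambda>q. indicator {..t} (bq (pi - fst q - snd q, snd q)) :: ennreal)"
  have [measurable]: "F \<in> borel_measurable (lborel \<Otimes>\<^sub>M lborel)" unfolding F_def by measurable
  have "II (\<lambda>p. indicator {..t} (Ha p / Hb p)) = II (\<lambda>p. F (snd p, fst p))"
  proof (rule II_cong)
    fix x y :: real
    assume a: "0 < x" "0 < y" "x + y < pi" "x \<noteq> pi/2" "y \<noteq> pi/2"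
    have "Ha (x, y) / Hb (x, y) = Hb (y, x) / Ha (y, x)"
      using H_formulas[OF a] H_formulas[of y x] a by simp
    also have "\<dots> = bq (pi - y - x, x)" using ratio_formula[of y x] a by simp
    finally show "indicator {..t} (Ha (x, y) / Hb (x, y)) = (\<lambda>p. F (snd p, fst p)) (x, y)"
      by (simp add: F_def)
  qed
  also have "\<dots> = II F" by (rule II_swap[symmetric]) measurable
  also have "\<dots> = II (\<lambda>p. indicator {..t} (bq p))"
    unfolding F_def by (rule II_refl[symmetric]) measurable
  finally show ?thesis using core by simp
qed



lemma measure_eqI_atMost:
  fixes M N :: "real measure"
  assumes sets: "sets M = sets borel" "sets N = sets borel"
  assumes fin: "\<And>x. emeasure M {..x} < \<infinity>"
  assumes "\<And>x. emeasure M {..x} = emeasure N {..x}"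
  shows "M = N"
proof (rule measure_eqI_generator_eq_countable)
  let ?LT = "\<lambda>a::real. {..a}" let ?E = "range ?LT"
  show "Int_stable ?E"
    by (auto simp: Int_stable_def)
  show "?E \<subseteq> Pow UNIV" "sets M = sigma_sets UNIV ?E" "sets N = sigma_sets UNIV ?E"
    unfolding sets borel_eq_atMost by auto
  show "?LT`Rats \<subseteq> ?E" "(\<Union>i\<in>Rats. ?LT i) = UNIV" "\<And>a. a \<in> ?LT`Rats \<Longrightarrow> emeasure M a \<noteq> \<infinity>"
    using fin Rats_no_top_le by (auto simp: less_top)
qed (auto intro: assms countable_rat)

lemma dist_gen:
  fixes M :: "'a measure" and \<phi> \<psi> :: "'a \<Rightarrow> real" and H :: "real \<times> real \<Rightarrow> real"
  assumes P: "prob_space M"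
    and J: "distributed M (lborel \<Otimes>\<^sub>M lborel) (\<lambda>\<omega>. (\<phi> \<omega>, \<psi> \<omega>))
      (\<lambda>(x, y). ennreal (indicator {0..pi} x / pi) * ennreal (indicator {0..pi} y / pi))"
    and Hm[measurable]: "H \<in> borel_measurable (lborel \<Otimes>\<^sub>M lborel)"
    and eq: "\<And>t. 2 * II (\<lambda>p. indicator {..t} (H p)) = ennreal (pi^2) * (\<integral>\<^sup>+z. ennreal (side_density z) * indicator {..t} z \<partial>lborel)"
  shows "distributed M lborel (\<lambda>\<omega>. H (tri_angles (\<phi> \<omega>) (\<psi> \<omega>))) (\<lambda>z. ennreal (side_density z))"
proof -
  interpret prob_space M by (rule P)
  have Jm[measurable]: "(\<lambda>\<omega>. (\<phi> \<omega>, \<psi> \<omega>)) \<in> measurable M (lborel \<Otimes>\<^sub>M lborel)"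
    using J by (simp add: distributed_def)
  define X where "X \<omega> = H (tri_angles (\<phi> \<omega>) (\<psi> \<omega>))" for \<omega>
  have HT[measurable]: "(\<lambda>p. H (tri_angles (fst p) (snd p))) \<in> borel_measurable (lborel \<Otimes>\<^sub>M lborel)"
    by measurable
  have Xm[measurable]: "X \<in> borel_measurable M"
    unfolding X_def[abs_def] using measurable_comp[OF Jm HT] by (simp add: o_def)
  have dm[measurable]: "(\<lambda>z. ennreal (side_density z)) \<in> borel_measurable lborel"
    unfolding side_density_def by measurable
  have "distr M lborel X = density lborel (\<lambda>z. ennreal (side_density z))"
  proof (rule measure_eqI_atMost)
    show "sets (distr M lborel X) = sets borel" "sets (density lborel (\<lambda>z. ennreal (side_density z))) = sets borel"
      by simp_all
    fix t :: real
    interpret D: prob_space "distr M lborel X" by (rule prob_space_distr) simp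
    show "emeasure (distr M lborel X) {..t} < \<infinity>"
      using D.emeasure_le_1[of "{..t}"] by (simp add: less_top[symmetric] top_unique)
    define S where "S = {p :: real \<times> real. H (tri_angles (fst p) (snd p)) \<le> t}"
    have "(\<lambda>p. H (tri_angles (fst p) (snd p))) -` {..t} \<inter> space (lborel \<Otimes>\<^sub>M lborel) \<in> sets (lborel \<Otimes>\<^sub>M lborel)"
      by (rule measurable_sets[OF HT]) simp
    moreover have "(\<lambda>p. H (tri_angles (fst p) (snd p))) -` {..t} \<inter> space (lborel \<Otimes>\<^sub>M lborel) = S"
      by (auto simp: S_def space_pair_measure)
    ultimately have Sm: "S \<in> sets (lborel \<Otimes>\<^sub>M lborel)" by simp
    have "emeasure (distr M lborel X) {..t} = emeasure M (X -` {..t} \<inter> space M)"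
      by (rule emeasure_distr) simp_all
    also have "X -` {..t} \<inter> space M = (\<lambda>\<omega>. (\<phi> \<omega>, \<psi> \<omega>)) -` S \<inter> space M"
      by (auto simp: X_def S_def)
    also have "emeasure M \<dots> = (\<integral>\<^sup>+p. (\<lambda>(x, y). ennreal (indicator {0..pi} x / pi) * ennreal (indicator {0..pi} y / pi)) p * indicator S p \<partial>(lborel \<Otimes>\<^sub>M lborel))"
      by (rule distributed_emeasure[OF J Sm])
    also have "\<dots> = (\<integral>\<^sup>+p. (\<lambda>(x, y). ennreal (indicator {0..pi} x / pi) * ennreal (indicator {0..pi} y / pi) * indicator S (x, y)) p \<partial>(lborel \<Otimes>\<^sub>M lborel))"
      by (intro nn_integral_cong) (auto split: prod.split)
    also have "\<dots> = (\<integral>\<^sup>+x. (\<integral>\<^sup>+y. ennreal (indicator {0..pi} x / pi) * ennreal (indicator {0..pi} y / pi) * indicator S (x, y) \<partial>lborel) \<partial>lborel)"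
    proof -
      have fm: "(\<lambda>(x, y). ennreal (indicator {0..pi} x / pi) * ennreal (indicator {0..pi} y / pi) * indicator S (x, y)) \<in> borel_measurable (lborel \<Otimes>\<^sub>M lborel)"
        using Sm by measurable
      show ?thesis using lborel.nn_integral_fst[OF fm] by simp
    qed
    also have "\<dots> = (\<integral>\<^sup>+x. (\<integral>\<^sup>+y. ennreal (1/pi^2) * (if 0 \<le> x \<and> x \<le> pi \<and> 0 \<le> y \<and> y \<le> pi then indicator {..t} (H (tri_angles x y)) else 0) \<partial>lborel) \<partial>lborel)"
    proof (intro nn_integral_cong)
      fix x y :: real
      show "ennreal (indicator {0..pi} x / pi) * ennreal (indicator {0..pi} y / pi) * indicator S (x, y) =
        ennreal (1/pi^2) * (if 0 \<le> x \<and> x \<le> pi \<and> 0 \<le> y \<and> y \<le> pi then indicator {..t} (H (tri_angles x y)) else 0)"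
        by (auto simp: indicator_def S_def ennreal_mult[symmetric] power2_eq_square)
    qed
    also have "\<dots> = (\<integral>\<^sup>+x. ennreal (1/pi^2) * (\<integral>\<^sup>+y. (if 0 \<le> x \<and> x \<le> pi \<and> 0 \<le> y \<and> y \<le> pi then indicator {..t} (H (tri_angles x y)) else 0) \<partial>lborel) \<partial>lborel)"
    proof (rule nn_integral_cong)
      fix x :: real
      have Qm: "(\<lambda>(x,y). if 0 \<le> x \<and> x \<le> pi \<and> 0 \<le> y \<and> y \<le> pi then indicator {..t} (H (tri_angles x y)) else (0::ennreal)) \<in> borel_measurable (lborel \<Otimes>\<^sub>M lborel)"
        by measurable
      show "(\<integral>\<^sup>+y. ennreal (1/pi^2) * (if 0 \<le> x \<and> x \<le> pi \<and> 0 \<le> y \<and> y \<le> pi then indicator {..t} (H (tri_angles x y)) else 0) \<partial>lborel)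
        = ennreal (1/pi^2) * (\<integral>\<^sup>+y. (if 0 \<le> x \<and> x \<le> pi \<and> 0 \<le> y \<and> y \<le> pi then indicator {..t} (H (tri_angles x y)) else 0) \<partial>lborel)"
        by (rule nn_integral_cmult) (use measurable_Pair2[OF Qm, of x] in simp)
    qed
    also have "\<dots> = ennreal (1/pi^2) * (\<integral>\<^sup>+x. (\<integral>\<^sup>+y. (if 0 \<le> x \<and> x \<le> pi \<and> 0 \<le> y \<and> y \<le> pi then indicator {..t} (H (tri_angles x y)) else 0) \<partial>lborel) \<partial>lborel)"
      by (rule nn_integral_cmult) measurable
    also have "(\<integral>\<^sup>+x. (\<integral>\<^sup>+y. (if 0 \<le> x \<and> x \<le> pi \<and> 0 \<le> y \<and> y \<le> pi then indicator {..t} (H (tri_angles x y)) else 0) \<partial>lborel) \<partial>lborel)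
       = 2 * II (\<lambda>p. indicator {..t} (H p))"
      by (rule II_fold) measurable
    also have "\<dots> = ennreal (pi^2) * (\<integral>\<^sup>+z. ennreal (side_density z) * indicator {..t} z \<partial>lborel)"
      by (rule eq)
    also have "ennreal (1/pi^2) * (ennreal (pi^2) * (\<integral>\<^sup>+z. ennreal (side_density z) * indicator {..t} z \<partial>lborel))
       = (\<integral>\<^sup>+z. ennreal (side_density z) * indicator {..t} z \<partial>lborel)"
    proof -
      have "ennreal (1/pi^2) * ennreal (pi^2) = 1"
        by (subst ennreal_mult[symmetric]) auto
      then show ?thesis by (metis mult.assoc mult_1)
    qed
    also have "\<dots> = emeasure (density lborel (\<lambda>z. ennreal (side_density z))) {..t}"
      by (rule emeasure_density[symmetric]) simp_all
    finally show "emeasure (distr M lborel X) {..t} = emeasure (density lborel (\<lambda>z. ennreal (side_density z))) {..t}" .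
  qed
  then show ?thesis
    unfolding distributed_def X_def[symmetric] using Xm dm by simp
qed

theorem mainTheorem18:
  fixes M :: "'a measure" and \<phi> \<psi> :: "'a \<Rightarrow> real"
  assumes "prob_space M"
    and "distributed M lborel \<phi> (\<lambda>x. ennreal (indicator {0..pi} x / pi))"
    and "distributed M lborel \<psi> (\<lambda>x. ennreal (indicator {0..pi} x / pi))"
    and "prob_space.indep_var M borel \<phi> borel \<psi>"
  shows "distributed M lborel (\<lambda>\<omega>. side_a (\<phi> \<omega>) (\<psi> \<omega>)) (\<lambda>z. ennreal (side_density z))
       \<and> distributed M lborel (\<lambda>\<omega>. side_b (\<phi> \<omega>) (\<psi> \<omega>)) (\<lambda>z. ennreal (side_density z))
       \<and> distributed M lborel (\<lambda>\<omega>. side_a (\<phi> \<omega>) (\<psi> \<omega>) / side_b (\<phi> \<omega>) (\<psi> \<omega>))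
           (\<lambda>z. ennreal (side_density z))
       \<and> distributed M lborel (\<lambda>\<omega>. side_b (\<phi> \<omega>) (\<psi> \<omega>) / side_a (\<phi> \<omega>) (\<psi> \<omega>))
           (\<lambda>z. ennreal (side_density z))"
proof -
  have cb: "case_bool a a i = a" for a :: "real measure" and i by (cases i) auto
  have ind: "prob_space.indep_var M lborel \<phi> lborel \<psi>"
    using assms(4) unfolding prob_space.indep_var_def[OF assms(1)] prob_space.indep_vars_def2[OF assms(1)]
    by (simp add: cb measurable_lborel2 sets_lborel)
  have J: "distributed M (lborel \<Otimes>\<^sub>M lborel) (\<lambda>\<omega>. (\<phi> \<omega>, \<psi> \<omega>))
      (\<lambda>(x, y). ennreal (indicator {0..pi} x / pi) * ennreal (indicator {0..pi} y / pi))"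
    by (rule prob_space.distributed_joint_indep[OF assms(1) sigma_finite_lborel sigma_finite_lborel assms(2,3) ind])
  have "distributed M lborel (\<lambda>\<omega>. Ha (tri_angles (\<phi> \<omega>) (\<psi> \<omega>))) (\<lambda>z. ennreal (side_density z))"
    by (rule dist_gen[OF assms(1) J _ sum_a]) measurable
  moreover have "distributed M lborel (\<lambda>\<omega>. Hb (tri_angles (\<phi> \<omega>) (\<psi> \<omega>))) (\<lambda>z. ennreal (side_density z))"
    by (rule dist_gen[OF assms(1) J _ sum_b]) measurable
  moreover have "distributed M lborel (\<lambda>\<omega>. (\<lambda>p. Ha p / Hb p) (tri_angles (\<phi> \<omega>) (\<psi> \<omega>))) (\<lambda>z. ennreal (side_density z))"
    by (rule dist_gen[OF assms(1) J _ sum_ab]) measurable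
  moreover have "distributed M lborel (\<lambda>\<omega>. (\<lambda>p. Hb p / Ha p) (tri_angles (\<phi> \<omega>) (\<psi> \<omega>))) (\<lambda>z. ennreal (side_density z))"
    by (rule dist_gen[OF assms(1) J _ sum_ba]) measurable
  ultimately show ?thesis by (simp add: side_a_eq side_b_eq)
qed


end
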